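(* Let $x_1,x_2,y_1,y_2\in\mathbb{R}^2$ be four points not all on one line, and let $\mu=\mu_1\delta_{x_1}+\mu_2\delta_{x_2}$, $\nu=\nu_1\delta_{y_1}+\nu_2\delta_{y_2}$ be probability measures with positive weights and $[\mu]=[\nu]=0$. Let $M=\sum_i\mu_i\,x_i\otimes x_i$, $N=\sum_j\nu_j\,y_j\otimes y_j$, and write $N-M=\lambda_a\,a\otimes a+\lambda_b\,b\otimes b$ with $\lambda_a<0<\lambda_b$ and $a,b$ orthonormal. For $i,j\in\{1,2\}$ set $i'=3-i$, $j'=3-j$ and $$\gamma_{ij}=\mu_i\,\frac{\langle b,y_{j'}-x_i\rangle}{\langle b,y_{j'}-y_j\rangle}.$$ Then the inequalities $$\langle x_2-y_2,y_1-x_1\rangle\ge0\quad\text{and}\quad\langle x_1-y_2,y_1-x_2\rangle\ge0$$ hold if and only if $\gamma_{ij}\ge0$ for all $i,j\in\{1,2\}$.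
   Context: $[\mu]=\int x\,\mu(dx)$. Under the hypotheses, $N-M$ has one negative and one positive eigenvalue, so the decomposition above exists; $\gamma_{ij}$ does not depend on the sign choice of $b$. *)

theory Defs
  imports "HOL-Analysis.Analysis"
begin

definition outer :: "real^2 \<Rightarrow> real^2 \<Rightarrow> real^2^2" where
  "outer u v = (\<chi> k l. u $ k * v $ l)"

end

theory Submission
  imports Defs
begin

lemma outer_mv: "outer u u *v w = (u \<bullet> w) *\<^sub>R u"
  by (simp add: vec_eq_iff outer_def matrix_vector_mult_def inner_vec_def sum_2 forall_2 algebra_simps)

lemma inner2: "(p::real^2) \<bullet> q = p$1*q$1 + p$2*q$2"
  by (simp add: inner_vec_def sum_2)

lemma collinear_mult:
  assumes "\<forall>x\<in>S. \<exists>c. x = c *\<^sub>R u" shows "collinear S"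
  unfolding collinear_def
proof (intro exI[of _ u] ballI)
  fix x y assume "x \<in> S" "y \<in> S"
  then obtain c d where "x = c *\<^sub>R u" "y = d *\<^sub>R u" using assms by blast
  then show "\<exists>c. x - y = c *\<^sub>R u" by (intro exI[of _ "c - d"]) (simp add: algebra_simps)
qed

lemma det_nz:
  fixes p q :: "real^2"
  assumes "\<not> collinear {c1 *\<^sub>R p, c2 *\<^sub>R p, d1 *\<^sub>R q, d2 *\<^sub>R q}"
  shows "p$1*q$2 - p$2*q$1 \<noteq> 0"
proof
  assume det: "p$1*q$2 - p$2*q$1 = 0"
  show False
  proof (cases "p = 0")
    case True
    then have "collinear {c1 *\<^sub>R p, c2 *\<^sub>R p, d1 *\<^sub>R q, d2 *\<^sub>R q}"
      by (intro collinear_mult[where u=q]) auto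
    with assms show False by simp
  next
    case False
    then have pp: "p \<bullet> p > 0" by simp
    define c where "c = (q \<bullet> p) / (p \<bullet> p)"
    have "q = c *\<^sub>R p"
    proof -
      have "(p \<bullet> p) *\<^sub>R q = (q \<bullet> p) *\<^sub>R p"
        using det by (simp add: vec_eq_iff forall_2 inner2 algebra_simps; metis mult.commute mult.left_commute)
      then show ?thesis
      proof -
        have "q = inverse (p \<bullet> p) *\<^sub>R ((p \<bullet> p) *\<^sub>R q)" using pp by simp
        also have "\<dots> = c *\<^sub>R p" unfolding c_def using \<open>(p \<bullet> p) *\<^sub>R q = (q \<bullet> p) *\<^sub>R p\<close>
          by (simp add: divide_inverse mult.commute)
        finally show ?thesis .
      qed
    qed
    then have "collinear {c1 *\<^sub>R p, c2 *\<^sub>R p, d1 *\<^sub>R q, d2 *\<^sub>R q}"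
      by (intro collinear_mult[where u=p]) auto
    with assms show False by simp
  qed
qed

lemma quad:
  fixes al be P Q S r t :: real
  assumes al: "al > 0" and be: "be > 0" and P: "P \<ge> 0" and Q: "Q \<ge> 0" and SPQ: "S^2 < P*Q"
    and r: "al*r^2 < be" and t: "al*t^2 \<le> be"
    and fr: "al*S*r^2 - (al*P+be*Q)*r + be*S = 0"
  shows "al*S*t^2 - (al*P+be*Q)*t + be*S \<le> 0 \<longleftrightarrow> r \<le> t"
    and "0 \<le> al*S*t^2 - (al*P+be*Q)*t + be*S \<longleftrightarrow> t \<le> r"
proof -
  define h where "h = al*S*(t+r) - (al*P+be*Q)"
  have eq: "al*S*t^2 - (al*P+be*Q)*t + be*S = (t - r) * h"
  proof -
    have "al*S*t^2 - (al*P+be*Q)*t + be*S = (al*S*t^2 - (al*P+be*Q)*t + be*S) - (al*S*r^2 - (al*P+be*Q)*r + be*S)"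
      using fr by simp
    also have "\<dots> = (t - r) * h" unfolding h_def by (simp add: algebra_simps power2_eq_square)
    finally show ?thesis .
  qed
  have PQ: "P*Q > 0" using SPQ by (smt (verit) zero_le_power2)
  have tr: "al*(t+r)^2 < 4*be"
  proof -
    have "(t+r)^2 \<le> 2*t^2 + 2*r^2" by (smt (verit) zero_le_power2 power2_diff power2_sum)
    then have "al*(t+r)^2 \<le> al*(2*t^2 + 2*r^2)" using al by (simp add: mult_left_mono)
    then show ?thesis using r t by (simp add: algebra_simps)
  qed
  have s1: "(al*S*(t+r))^2 \<le> al^2*(P*Q)*(t+r)^2"
  proof -
    have "(al*S*(t+r))^2 = al^2*(t+r)^2*S^2" by (simp add: power_mult_distrib)
    also have "\<dots> \<le> al^2*(t+r)^2*(P*Q)" using SPQ by (intro mult_left_mono) auto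
    finally show ?thesis by (simp add: algebra_simps)
  qed
  have s2: "al^2*(P*Q)*(t+r)^2 < 4*al*be*(P*Q)"
  proof -
    have "(al*(P*Q))*(al*(t+r)^2) < (al*(P*Q))*(4*be)" using tr al PQ by (intro mult_strict_left_mono) auto
    then show ?thesis by (simp add: algebra_simps power2_eq_square)
  qed
  have s3: "4*al*be*(P*Q) \<le> (al*P+be*Q)^2"
  proof -
    have "(al*P-be*Q)^2 \<ge> 0" by simp
    then show ?thesis by (simp add: power2_eq_square algebra_simps)
  qed
  have pos: "al*P+be*Q > 0" using al be P Q PQ
    by (smt (verit) mult_nonneg_nonneg mult_pos_pos zero_less_mult_iff)
  have "(al*S*(t+r))^2 < (al*P+be*Q)^2" using s1 s2 s3 by linarith
  then have "\<bar>al*S*(t+r)\<bar> < al*P+be*Q" using pos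
    by (metis abs_of_pos power2_abs power_less_imp_less_base less_imp_le)
  then have hneg: "h < 0" unfolding h_def by linarith
  show "al*S*t^2 - (al*P+be*Q)*t + be*S \<le> 0 \<longleftrightarrow> r \<le> t"
    unfolding eq using hneg by (simp add: mult_le_0_iff)
  show "0 \<le> al*S*t^2 - (al*P+be*Q)*t + be*S \<longleftrightarrow> t \<le> r"
    unfolding eq using hneg by (simp add: zero_le_mult_iff)
qed

lemma sq_le:
  fixes al t z be :: real
  assumes "0 < al" "0 < t" "t \<le> z" "al*(t*z) = be"
  shows "al*t^2 \<le> be"
proof -
  have "(al*t)*t \<le> (al*t)*z" using assms by (intro mult_left_mono) auto
  then show ?thesis using assms(4) by (simp add: power2_eq_square mult.assoc)
qed

lemma core:
  fixes m1 m2 n1 n2 P S Q bp bq lb :: real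
  assumes m1: "m1 > 0" and m2: "m2 > 0" and n1: "n1 > 0" and n2: "n2 > 0"
    and P: "P \<ge> 0" and Q: "Q \<ge> 0" and SPQ: "S^2 < P*Q"
    and h1: "n1*n2*bq^2 - m1*m2*bp^2 = lb" and lb: "lb > 0"
    and h2: "n1*n2*bq*S - m1*m2*bp*P = lb*bp"
    and h3: "n1*n2*bq*Q - m1*m2*bp*S = lb*bq"
  shows "(m1*m2*P - (m1*n2+m2*n1)*S + n1*n2*Q \<ge> 0 \<and> m1*m2*P + (m2*n2+m1*n1)*S + n1*n2*Q \<ge> 0) \<longleftrightarrow>
    (m1*(-(n1*bq) - m2*bp)/(-bq) \<ge> 0 \<and> m1*(n2*bq - m2*bp)/bq \<ge> 0 \<and>
     m2*(-(n1*bq) + m1*bp)/(-bq) \<ge> 0 \<and> m2*(n2*bq + m1*bp)/bq \<ge> 0)"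
proof -
  define al where "al = m1*m2"
  define be where "be = n1*n2"
  have al: "al > 0" unfolding al_def using m1 m2 by simp
  have be: "be > 0" unfolding be_def using n1 n2 by simp
  have bq: "bq \<noteq> 0"
  proof
    assume "bq = 0"
    with h1 lb have "- (al*bp^2) > 0" unfolding al_def by simp
    moreover have "al*bp^2 \<ge> 0" using al by simp
    ultimately show False by linarith
  qed
  define r where "r = bp/bq"
  have bp: "bp = r*bq" unfolding r_def using bq by simp
  have v2: "bq^2 > 0" using bq by simp
  have "bq^2*(be - al*r^2) = lb" using h1 unfolding bp al_def be_def by (simp add: algebra_simps power2_eq_square)
  then have "bq^2*(be - al*r^2) > 0" using lb by simp
  then have r2: "al*r^2 < be" using v2 by (simp add: zero_less_mult_iff)
  have "bq^2*(al*S*r^2 - (al*P+be*Q)*r + be*S) = bq*(n1*n2*bq*S - m1*m2*bp*P) - bp*(n1*n2*bq*Q - m1*m2*bp*S)"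
    unfolding bp al_def be_def by (simp add: algebra_simps power2_eq_square)
  also have "\<dots> = 0" using h2 h3 by (simp add: algebra_simps)
  finally have fr: "al*S*r^2 - (al*P+be*Q)*r + be*S = 0" using v2 by simp
  define E1 where "E1 = m1*m2*P - (m1*n2+m2*n1)*S + n1*n2*Q"
  define E2 where "E2 = m1*m2*P + (m2*n2+m1*n1)*S + n1*n2*Q"
  define f where "f t = al*S*t^2 - (al*P+be*Q)*t + be*S" for t
  define t1 where "t1 = n2/m2"
  define t2 where "t2 = n1/m1"
  define t3 where "t3 = n1/m2"
  define t4 where "t4 = n2/m1"
  have t1p: "t1 > 0" and t2p: "t2 > 0" and t3p: "t3 > 0" and t4p: "t4 > 0"
    unfolding t1_def t2_def t3_def t4_def using m1 m2 n1 n2 by auto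
  have ft1: "f t1 = -(t1*E1)" unfolding f_def t1_def E1_def al_def be_def using m2
    by (simp add: field_simps power2_eq_square)
  have ft2: "f t2 = -(t2*E1)" unfolding f_def t2_def E1_def al_def be_def using m1
    by (simp add: field_simps power2_eq_square)
  have ft3: "f (-t3) = t3*E2" unfolding f_def t3_def E2_def al_def be_def using m2
    by (simp add: field_simps power2_eq_square)
  have ft4: "f (-t4) = t4*E2" unfolding f_def t4_def E2_def al_def be_def using m1
    by (simp add: field_simps power2_eq_square)
  have t12: "al*(t1*t2) = be" unfolding t1_def t2_def al_def be_def using m1 m2 by (simp add: field_simps)
  have t34: "al*(t3*t4) = be" unfolding t3_def t4_def al_def be_def using m1 m2 by (simp add: field_simps)
  have quadf: "f t \<le> 0 \<longleftrightarrow> r \<le> t" "0 \<le> f t \<longleftrightarrow> t \<le> r" if "al*t^2 \<le> be" for t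
    unfolding f_def using quad[OF al be P Q SPQ r2 that fr] by auto
  have A: "E1 \<ge> 0 \<longleftrightarrow> r \<le> t1 \<and> r \<le> t2"
  proof (cases "t1 \<le> t2")
    case True
    then have "al*t1^2 \<le> be" using sq_le[OF al t1p True t12] by simp
    then have "f t1 \<le> 0 \<longleftrightarrow> r \<le> t1" by (rule quadf)
    moreover have "f t1 \<le> 0 \<longleftrightarrow> E1 \<ge> 0" unfolding ft1 using t1p by (simp add: zero_le_mult_iff)
    ultimately show ?thesis using True by auto
  next
    case False
    then have "al*t2^2 \<le> be" using sq_le[OF al t2p _, of t1 be] False t12 by (simp add: mult.commute)
    then have "f t2 \<le> 0 \<longleftrightarrow> r \<le> t2" by (rule quadf)
    moreover have "f t2 \<le> 0 \<longleftrightarrow> E1 \<ge> 0" unfolding ft2 using t2p by (simp add: zero_le_mult_iff)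
    ultimately show ?thesis using False by auto
  qed
  have B: "E2 \<ge> 0 \<longleftrightarrow> -t3 \<le> r \<and> -t4 \<le> r"
  proof (cases "t3 \<le> t4")
    case True
    then have "al*(-t3)^2 \<le> be" using sq_le[OF al t3p True t34] by simp
    then have "0 \<le> f (-t3) \<longleftrightarrow> -t3 \<le> r" by (rule quadf)
    moreover have "0 \<le> f (-t3) \<longleftrightarrow> E2 \<ge> 0" unfolding ft3 using t3p by (simp add: zero_le_mult_iff)
    ultimately show ?thesis using True by auto
  next
    case False
    then have "al*(-t4)^2 \<le> be" using sq_le[OF al t4p _, of t3 be] False t34 by (simp add: mult.commute)
    then have "0 \<le> f (-t4) \<longleftrightarrow> -t4 \<le> r" by (rule quadf)
    moreover have "0 \<le> f (-t4) \<longleftrightarrow> E2 \<ge> 0" unfolding ft4 using t4p by (simp add: zero_le_mult_iff)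
    ultimately show ?thesis using False by auto
  qed
  have g1: "m1*(-(n1*bq) - m2*bp)/(-bq) = m1*(n1 + m2*r)" unfolding bp using bq by (simp add: field_simps)
  have g2: "m1*(n2*bq - m2*bp)/bq = m1*(n2 - m2*r)" unfolding bp using bq by (simp add: field_simps)
  have g3: "m2*(-(n1*bq) + m1*bp)/(-bq) = m2*(n1 - m1*r)" unfolding bp using bq by (simp add: field_simps)
  have g4: "m2*(n2*bq + m1*bp)/bq = m2*(n2 + m1*r)" unfolding bp using bq by (simp add: field_simps)
  have c1: "0 \<le> m1*(n1 + m2*r) \<longleftrightarrow> -t3 \<le> r"
  proof -
    have "0 \<le> m1*(n1 + m2*r) \<longleftrightarrow> 0 \<le> n1 + m2*r" using m1 by (simp add: zero_le_mult_iff)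
    also have "\<dots> \<longleftrightarrow> -t3 \<le> r" unfolding t3_def using m2 by (simp add: field_simps; linarith)
    finally show ?thesis .
  qed
  have c2: "0 \<le> m1*(n2 - m2*r) \<longleftrightarrow> r \<le> t1"
  proof -
    have "0 \<le> m1*(n2 - m2*r) \<longleftrightarrow> 0 \<le> n2 - m2*r" using m1 by (simp add: zero_le_mult_iff)
    also have "\<dots> \<longleftrightarrow> r \<le> t1" unfolding t1_def using m2 by (simp add: field_simps; linarith)
    finally show ?thesis .
  qed
  have c3: "0 \<le> m2*(n1 - m1*r) \<longleftrightarrow> r \<le> t2"
  proof -
    have "0 \<le> m2*(n1 - m1*r) \<longleftrightarrow> 0 \<le> n1 - m1*r" using m2 by (simp add: zero_le_mult_iff)
    also have "\<dots> \<longleftrightarrow> r \<le> t2" unfolding t2_def using m1 by (simp add: field_simps; linarith)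
    finally show ?thesis .
  qed
  have c4: "0 \<le> m2*(n2 + m1*r) \<longleftrightarrow> -t4 \<le> r"
  proof -
    have "0 \<le> m2*(n2 + m1*r) \<longleftrightarrow> 0 \<le> n2 + m1*r" using m2 by (simp add: zero_le_mult_iff)
    also have "\<dots> \<longleftrightarrow> -t4 \<le> r" unfolding t4_def using m1 by (simp add: field_simps; linarith)
    finally show ?thesis .
  qed
  show ?thesis unfolding g1 g2 g3 g4 c1 c2 c3 c4 E1_def[symmetric] E2_def[symmetric] A B by auto
qed


theorem lemma4p4:
  fixes x y :: "nat \<Rightarrow> real^2"
    and \<mu> \<nu> :: "nat \<Rightarrow> real"
    and a b :: "real^2"
    and la lb :: real
  assumes not_collinear: "\<not> collinear {x 1, x 2, y 1, y 2}"
    and mu_pos: "\<mu> 1 > 0" "\<mu> 2 > 0" and mu_prob: "\<mu> 1 + \<mu> 2 = 1"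
    and nu_pos: "\<nu> 1 > 0" "\<nu> 2 > 0" and nu_prob: "\<nu> 1 + \<nu> 2 = 1"
    and mu_bary: "\<mu> 1 *\<^sub>R x 1 + \<mu> 2 *\<^sub>R x 2 = 0"
    and nu_bary: "\<nu> 1 *\<^sub>R y 1 + \<nu> 2 *\<^sub>R y 2 = 0"
    and decomp: "(\<Sum>j\<in>{1,2}. \<nu> j *\<^sub>R outer (y j) (y j))
                 - (\<Sum>i\<in>{1,2}. \<mu> i *\<^sub>R outer (x i) (x i))
               = la *\<^sub>R outer a a + lb *\<^sub>R outer b b"
    and eig_signs: "la < 0" "0 < lb"
    and orthonormal: "a \<bullet> a = 1" "b \<bullet> b = 1" "a \<bullet> b = 0"
  shows "((x 2 - y 2) \<bullet> (y 1 - x 1) \<ge> 0 \<and> (x 1 - y 2) \<bullet> (y 1 - x 2) \<ge> 0)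
     \<longleftrightarrow> (\<forall>i\<in>{1::nat,2}. \<forall>j\<in>{1::nat,2}.
            \<mu> i * (b \<bullet> (y (3 - j) - x i)) / (b \<bullet> (y (3 - j) - y j)) \<ge> 0)"
proof -
  define p where "p = x 1 - x 2"
  define q where "q = y 1 - y 2"
  have mx2: "\<mu> 2 *\<^sub>R x 2 = - (\<mu> 1 *\<^sub>R x 1)" using mu_bary by (simp add: eq_neg_iff_add_eq_0 add.commute)
  have mx1: "\<mu> 1 *\<^sub>R x 1 = - (\<mu> 2 *\<^sub>R x 2)" using mu_bary by (simp add: eq_neg_iff_add_eq_0)
  have ny2: "\<nu> 2 *\<^sub>R y 2 = - (\<nu> 1 *\<^sub>R y 1)" using nu_bary by (simp add: eq_neg_iff_add_eq_0 add.commute)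
  have ny1: "\<nu> 1 *\<^sub>R y 1 = - (\<nu> 2 *\<^sub>R y 2)" using nu_bary by (simp add: eq_neg_iff_add_eq_0)
  have x1: "x 1 = \<mu> 2 *\<^sub>R p"
  proof -
    have "x 1 = (\<mu> 1 + \<mu> 2) *\<^sub>R x 1" using mu_prob by simp
    also have "\<dots> = \<mu> 2 *\<^sub>R p" unfolding p_def using mx2 by (simp add: algebra_simps)
    finally show ?thesis .
  qed
  have x2: "x 2 = - (\<mu> 1 *\<^sub>R p)"
  proof -
    have "x 2 = (\<mu> 1 + \<mu> 2) *\<^sub>R x 2" using mu_prob by simp
    also have "\<dots> = - (\<mu> 1 *\<^sub>R p)" unfolding p_def using mx1 by (simp add: algebra_simps)
    finally show ?thesis .
  qed
  have y1: "y 1 = \<nu> 2 *\<^sub>R q"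
  proof -
    have "y 1 = (\<nu> 1 + \<nu> 2) *\<^sub>R y 1" using nu_prob by simp
    also have "\<dots> = \<nu> 2 *\<^sub>R q" unfolding q_def using ny2 by (simp add: algebra_simps)
    finally show ?thesis .
  qed
  have y2: "y 2 = - (\<nu> 1 *\<^sub>R q)"
  proof -
    have "y 2 = (\<nu> 1 + \<nu> 2) *\<^sub>R y 2" using nu_prob by simp
    also have "\<dots> = - (\<nu> 1 *\<^sub>R q)" unfolding q_def using ny1 by (simp add: algebra_simps)
    finally show ?thesis .
  qed
  have nc: "\<not> collinear {\<mu> 2 *\<^sub>R p, (- \<mu> 1) *\<^sub>R p, \<nu> 2 *\<^sub>R q, (- \<nu> 1) *\<^sub>R q}"
    using not_collinear unfolding x1 x2 y1 y2 by simp
  have det: "p$1*q$2 - p$2*q$1 \<noteq> 0" by (rule det_nz[OF nc])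
  have SPQ: "(p \<bullet> q)^2 < (p \<bullet> p) * (q \<bullet> q)"
  proof -
    have "(p \<bullet> p) * (q \<bullet> q) - (p \<bullet> q)^2 = (p$1*q$2 - p$2*q$1)^2"
      by (simp add: inner2 power2_eq_square algebra_simps)
    moreover have "(p$1*q$2 - p$2*q$1)^2 > 0" using det by simp
    ultimately show ?thesis by linarith
  qed
  have bil: "\<nu> 1 * \<nu> 2 * (q \<bullet> w) * (q \<bullet> z) - \<mu> 1 * \<mu> 2 * (p \<bullet> w) * (p \<bullet> z)
      = la * (a \<bullet> w) * (a \<bullet> z) + lb * (b \<bullet> w) * (b \<bullet> z)" for w z
  proof -
    have e1: "(\<Sum>j\<in>{1::nat,2}. \<nu> j *\<^sub>R outer (y j) (y j)) = \<nu> 1 *\<^sub>R outer (y 1) (y 1) + \<nu> 2 *\<^sub>R outer (y 2) (y 2)" by simp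
    have e2: "(\<Sum>j\<in>{1::nat,2}. \<mu> j *\<^sub>R outer (x j) (x j)) = \<mu> 1 *\<^sub>R outer (x 1) (x 1) + \<mu> 2 *\<^sub>R outer (x 2) (x 2)" by simp
    have d: "\<nu> 1 *\<^sub>R outer (\<nu> 2 *\<^sub>R q) (\<nu> 2 *\<^sub>R q) + \<nu> 2 *\<^sub>R outer (- (\<nu> 1 *\<^sub>R q)) (- (\<nu> 1 *\<^sub>R q))
       - (\<mu> 1 *\<^sub>R outer (\<mu> 2 *\<^sub>R p) (\<mu> 2 *\<^sub>R p) + \<mu> 2 *\<^sub>R outer (- (\<mu> 1 *\<^sub>R p)) (- (\<mu> 1 *\<^sub>R p)))
       = la *\<^sub>R outer a a + lb *\<^sub>R outer b b"
      using decomp unfolding e1 e2 x1[symmetric] x2[symmetric] y1[symmetric] y2[symmetric] .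
    have "z \<bullet> ((\<nu> 1 *\<^sub>R outer (\<nu> 2 *\<^sub>R q) (\<nu> 2 *\<^sub>R q) + \<nu> 2 *\<^sub>R outer (- (\<nu> 1 *\<^sub>R q)) (- (\<nu> 1 *\<^sub>R q))
       - (\<mu> 1 *\<^sub>R outer (\<mu> 2 *\<^sub>R p) (\<mu> 2 *\<^sub>R p) + \<mu> 2 *\<^sub>R outer (- (\<mu> 1 *\<^sub>R p)) (- (\<mu> 1 *\<^sub>R p)))) *v w)
        = z \<bullet> ((la *\<^sub>R outer a a + lb *\<^sub>R outer b b) *v w)" using d by simp
    then have F: "(\<nu> 1*(\<nu> 1*\<nu> 2) + \<nu> 1*(\<nu> 2*\<nu> 2)) * ((q \<bullet> w) * (q \<bullet> z))
        - (\<mu> 1*(\<mu> 1*\<mu> 2) + \<mu> 1*(\<mu> 2*\<mu> 2)) * ((p \<bullet> w) * (p \<bullet> z))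
        = la * (a \<bullet> w) * (a \<bullet> z) + lb * (b \<bullet> w) * (b \<bullet> z)"
      by (simp add: algebra_simps scaleR_matrix_vector_assoc[symmetric] outer_mv
          inner_commute power2_eq_square)
    have N: "\<nu> 1*(\<nu> 1*\<nu> 2) + \<nu> 1*(\<nu> 2*\<nu> 2) = \<nu> 1 * \<nu> 2"
    proof -
      have "\<nu> 1*(\<nu> 1*\<nu> 2) + \<nu> 1*(\<nu> 2*\<nu> 2) = \<nu> 1 * \<nu> 2 * (\<nu> 1 + \<nu> 2)" by (simp add: algebra_simps)
      then show ?thesis using nu_prob by simp
    qed
    have M: "\<mu> 1*(\<mu> 1*\<mu> 2) + \<mu> 1*(\<mu> 2*\<mu> 2) = \<mu> 1 * \<mu> 2"
    proof -
      have "\<mu> 1*(\<mu> 1*\<mu> 2) + \<mu> 1*(\<mu> 2*\<mu> 2) = \<mu> 1 * \<mu> 2 * (\<mu> 1 + \<mu> 2)" by (simp add: algebra_simps)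
      then show ?thesis using mu_prob by simp
    qed
    from F show ?thesis unfolding N M by (simp add: algebra_simps)
  qed
  define bp where "bp = p \<bullet> b"
  define bq where "bq = q \<bullet> b"
  have h1: "\<nu> 1 * \<nu> 2 * bq^2 - \<mu> 1 * \<mu> 2 * bp^2 = lb"
    using bil[of b b] orthonormal unfolding bp_def bq_def by (simp add: power2_eq_square inner_commute)
  have h2: "\<nu> 1 * \<nu> 2 * bq * (p \<bullet> q) - \<mu> 1 * \<mu> 2 * bp * (p \<bullet> p) = lb * bp"
    using bil[of b p] orthonormal unfolding bp_def bq_def by (simp add: inner_commute)
  have h3: "\<nu> 1 * \<nu> 2 * bq * (q \<bullet> q) - \<mu> 1 * \<mu> 2 * bp * (p \<bullet> q) = lb * bq"
    using bil[of b q] orthonormal unfolding bp_def bq_def by (simp add: inner_commute)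
  note C = core[OF mu_pos nu_pos inner_ge_zero inner_ge_zero SPQ h1 eig_signs(2) h2 h3]
  have L1: "(x 2 - y 2) \<bullet> (y 1 - x 1) = \<mu> 1 * \<mu> 2 * (p \<bullet> p) - (\<mu> 1 * \<nu> 2 + \<mu> 2 * \<nu> 1) * (p \<bullet> q) + \<nu> 1 * \<nu> 2 * (q \<bullet> q)"
    unfolding x1 x2 y1 y2 by (simp add: inner_diff_left inner_diff_right inner_commute algebra_simps)
  have L2: "(x 1 - y 2) \<bullet> (y 1 - x 2) = \<mu> 1 * \<mu> 2 * (p \<bullet> p) + (\<mu> 2 * \<nu> 2 + \<mu> 1 * \<nu> 1) * (p \<bullet> q) + \<nu> 1 * \<nu> 2 * (q \<bullet> q)"
    unfolding x1 x2 y1 y2 by (simp add: inner_diff_left inner_diff_right inner_commute algebra_simps)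
  have R: "(\<forall>i\<in>{1::nat,2}. \<forall>j\<in>{1::nat,2}. F i j) \<longleftrightarrow> F 1 1 \<and> F 1 2 \<and> F 2 1 \<and> F 2 2" for F :: "nat \<Rightarrow> nat \<Rightarrow> bool"
    by auto
  have n31: "3 - 1 = (2::nat)" and n32: "3 - 2 = (1::nat)" by simp_all
  have g11: "b \<bullet> (y 2 - x 1) = -(\<nu> 1 * bq) - \<mu> 2 * bp" unfolding x1 y2 bp_def bq_def by (simp add: inner_diff_right inner_add_right inner_commute)
  have g12: "b \<bullet> (y 1 - x 1) = \<nu> 2 * bq - \<mu> 2 * bp" unfolding x1 y1 bp_def bq_def by (simp add: inner_diff_right inner_add_right inner_commute)
  have g21: "b \<bullet> (y 2 - x 2) = -(\<nu> 1 * bq) + \<mu> 1 * bp" unfolding x2 y2 bp_def bq_def by (simp add: inner_diff_right inner_add_right inner_commute)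
  have g22: "b \<bullet> (y 1 - x 2) = \<nu> 2 * bq + \<mu> 1 * bp" unfolding x2 y1 bp_def bq_def by (simp add: inner_diff_right inner_add_right inner_commute)
  have d1: "b \<bullet> (y 2 - y 1) = - bq"
  proof -
    have "b \<bullet> (y 2 - y 1) = - ((\<nu> 1 + \<nu> 2) * bq)" unfolding y1 y2 bq_def
      by (simp add: inner_diff_right inner_commute algebra_simps)
    then show ?thesis using nu_prob by simp
  qed
  have d2: "b \<bullet> (y 1 - y 2) = bq"
  proof -
    have "b \<bullet> (y 1 - y 2) = (\<nu> 1 + \<nu> 2) * bq" unfolding y1 y2 bq_def
      by (simp add: inner_diff_right inner_commute algebra_simps)
    then show ?thesis using nu_prob by simp
  qed
  show ?thesis
    unfolding R n31 n32 g11 g12 g21 g22 d1 d2 L1 L2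
    by (rule C)
qed

end
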